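(* Let $((A,\cdot),N)$ be a Nijenhuis algebra with multiplication $\mu$. Then there is a bijection between the set of equivalence classes of infinitesimal deformations of $((A,\cdot),N)$ and the second cohomology group $H^2_{\mathrm{NAlg}}((A,N))$.
   Context: Over a field $\mathbf{k}$ of characteristic $0$. A Nijenhuis algebra is an associative algebra $(A,\cdot)$ with linear $N$ satisfying $N(a)N(b)=N(N(a)b+aN(b)-N(ab))$. An infinitesimal deformation is a pair $\mu_t=\mu+t\mu_1$ ($\mu_1\in\mathrm{Hom}(A^{\otimes2},A)$), $N_t=N+tN_1$ ($N_1\in\mathrm{Hom}(A,A)$) such that $((A[t]/(t^2),\mu_t),N_t)$ is a Nijenhuis algebra over $\mathbf{k}[t]/(t^2)$. Two infinitesimal deformations $(\mu+t\mu_1,N+tN_1)$, $(\mu+t\mu'_1,N+tN'_1)$ are equivalent if there is a $\mathbf{k}[t]/(t^2)$-linear map $\varphi_t=\mathrm{Id}_A+t\varphi_1$ which is an isomorphism of Nijenhuis algebras between them (respects multiplications and intertwines $N_t$, $N'_t$). Cochain complex: $C^0_{\mathrm{NAlg}}((A,N))=0$, $C^1=\mathrm{Hom}(A,A)$, $C^n=\mathrm{Hom}(A^{\otimes n},A)\oplus\mathrm{Hom}(A^{\otimes n-1},A)$ for $n\ge2$; $\delta_{\mathrm{NAlg}}(f)=(\delta_{\mathrm{Hoch}}f,-\partial^Nf)$ for $f\in C^1$, $\delta_{\mathrm{NAlg}}(\chi,F)=(\delta_{\mathrm{Hoch}}\chi,\ d_NF+(-1)^n\partial^N\chi)$ for $(\chi,F)\in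 C^n$, $n\ge2$, where $(\delta_{\mathrm{Hoch}}f)(a_1,\dots,a_{n+1})=a_1f(a_2,\dots,a_{n+1})+\sum_{i=1}^n(-1)^if(\dots,a_ia_{i+1},\dots)+(-1)^{n+1}f(a_1,\dots,a_n)a_{n+1}$; $(d_NF)(a_1,\dots,a_{n+1})=N(a_1)F(a_2,\dots,a_{n+1})-(-1)^nF(a_1,\dots,a_n)N(a_{n+1})+\sum_{i=1}^n(-1)^iF(a_1,\dots,a_{i-1},N(a_i)a_{i+1}+a_iN(a_{i+1})-N(a_ia_{i+1}),\dots,a_{n+1})-N((\delta_{\mathrm{Hoch}}F)(a_1,\dots,a_{n+1}))$; $\partial^N(f)(a_1,\dots,a_n)=\sum_{S\subseteq\{1..n\}}(-1)^{|S|}N^{|S|}(f(b_1,\dots,b_n))$, $b_i=a_i$ for $i\in S$, $b_i=N(a_i)$ otherwise. $H^2_{\mathrm{NAlg}}((A,N))$ = 2-cocycles modulo 2-coboundaries. *)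

theory Defs
  imports Complex_Main "HOL-Library.Product_Plus" "HOL-Library.Function_Algebras"
begin

text \<open>A is the type 'a, a k-vector space via the scalar multiplication sc :: 'k => 'a => 'a.
  Hom(A,A) = k-linear maps, Hom(A (x) A, A) = k-bilinear maps.\<close>

definition lin :: "('k::field \<Rightarrow> 'a::ab_group_add \<Rightarrow> 'a) \<Rightarrow> ('a \<Rightarrow> 'a) \<Rightarrow> bool" where
  "lin sc f \<longleftrightarrow> Vector_Spaces.linear sc sc f"

definition bilin :: "('k::field \<Rightarrow> 'a::ab_group_add \<Rightarrow> 'a) \<Rightarrow> ('a \<Rightarrow> 'a \<Rightarrow> 'a) \<Rightarrow> bool" where
  "bilin sc f \<longleftrightarrow> (\<forall>x. lin sc (f x)) \<and> (\<forall>y. lin sc (\<lambda>x. f x y))"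

definition assoc_mult :: "('a \<Rightarrow> 'a \<Rightarrow> 'a) \<Rightarrow> bool" where
  "assoc_mult m \<longleftrightarrow> (\<forall>a b c. m (m a b) c = m a (m b c))"

definition nijenhuis_id :: "('a \<Rightarrow> 'a \<Rightarrow> 'a::ab_group_add) \<Rightarrow> ('a \<Rightarrow> 'a) \<Rightarrow> bool" where
  "nijenhuis_id m N \<longleftrightarrow>
     (\<forall>a b. m (N a) (N b) = N (m (N a) b + m a (N b) - N (m a b)))"

definition nijenhuis_algebra ::
  "('k::field \<Rightarrow> 'a::ab_group_add \<Rightarrow> 'a) \<Rightarrow> ('a \<Rightarrow> 'a \<Rightarrow> 'a) \<Rightarrow> ('a \<Rightarrow> 'a) \<Rightarrow> bool" where
  "nijenhuis_algebra sc m N \<longleftrightarrow>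
     vector_space sc \<and> bilin sc m \<and> assoc_mult m \<and> lin sc N \<and> nijenhuis_id m N"

text \<open>An element a0 + t a1 of A[t]/(t^2) is the pair (a0, a1).\<close>

definition mult_t :: "('a \<Rightarrow> 'a \<Rightarrow> 'a::ab_group_add) \<Rightarrow> ('a \<Rightarrow> 'a \<Rightarrow> 'a)
    \<Rightarrow> 'a \<times> 'a \<Rightarrow> 'a \<times> 'a \<Rightarrow> 'a \<times> 'a" where
  "mult_t m m1 x y = (m (fst x) (fst y),
      m (fst x) (snd y) + m (snd x) (fst y) + m1 (fst x) (fst y))"

definition op_t :: "('a \<Rightarrow> 'a::ab_group_add) \<Rightarrow> ('a \<Rightarrow> 'a) \<Rightarrow> 'a \<times> 'a \<Rightarrow> 'a \<times> 'a" where
  "op_t N N1 x = (N (fst x), N (snd x) + N1 (fst x))"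

text \<open>Infinitesimal deformation (mu + t mu1, N + t N1), recorded as the pair (mu1, N1).\<close>

definition inf_deformation ::
  "('k::field \<Rightarrow> 'a::ab_group_add \<Rightarrow> 'a) \<Rightarrow> ('a \<Rightarrow> 'a \<Rightarrow> 'a) \<Rightarrow> ('a \<Rightarrow> 'a)
     \<Rightarrow> (('a \<Rightarrow> 'a \<Rightarrow> 'a) \<times> ('a \<Rightarrow> 'a)) set" where
  "inf_deformation sc m N = {(m1, N1). bilin sc m1 \<and> lin sc N1 \<and>
      assoc_mult (mult_t m m1) \<and> nijenhuis_id (mult_t m m1) (op_t N N1)}"

text \<open>Equivalence via phi_t = Id + t phi1 : (A[t], mu'_t, N'_t) -> (A[t], mu_t, N_t).\<close>

definition deform_equiv ::
  "('k::field \<Rightarrow> 'a::ab_group_add \<Rightarrow> 'a) \<Rightarrow> ('a \<Rightarrow> 'a \<Rightarrow> 'a) \<Rightarrow> ('a \<Rightarrow> 'a)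
     \<Rightarrow> ((('a \<Rightarrow> 'a \<Rightarrow> 'a) \<times> ('a \<Rightarrow> 'a)) \<times> (('a \<Rightarrow> 'a \<Rightarrow> 'a) \<times> ('a \<Rightarrow> 'a))) set" where
  "deform_equiv sc m N = {((m1, N1), (m1', N1')).
      (m1, N1) \<in> inf_deformation sc m N \<and> (m1', N1') \<in> inf_deformation sc m N \<and>
      (\<exists>phi1. lin sc phi1 \<and>
         (let phit = op_t id phi1 in
            bij phit \<and>
            (\<forall>x y. phit (mult_t m m1' x y) = mult_t m m1 (phit x) (phit y)) \<and>
            (\<forall>x. phit (op_t N N1' x) = op_t N N1 (phit x))))}"

definition hoch1 :: "('a \<Rightarrow> 'a \<Rightarrow> 'a::ab_group_add) \<Rightarrow> ('a \<Rightarrow> 'a) \<Rightarrow> 'a \<Rightarrow> 'a \<Rightarrow> 'a" where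
  "hoch1 m f a1 a2 = m a1 (f a2) - f (m a1 a2) + m (f a1) a2"

definition hoch2 :: "('a \<Rightarrow> 'a \<Rightarrow> 'a::ab_group_add) \<Rightarrow> ('a \<Rightarrow> 'a \<Rightarrow> 'a) \<Rightarrow> 'a \<Rightarrow> 'a \<Rightarrow> 'a \<Rightarrow> 'a" where
  "hoch2 m f a1 a2 a3 = m a1 (f a2 a3) - f (m a1 a2) a3 + f a1 (m a2 a3) - m (f a1 a2) a3"

text \<open>partial^N on 1- and 2-cochains (sum over subsets S, b_i = a_i for i in S, N a_i otherwise).\<close>

definition partialN1 :: "('a \<Rightarrow> 'a::ab_group_add) \<Rightarrow> ('a \<Rightarrow> 'a) \<Rightarrow> 'a \<Rightarrow> 'a" where
  "partialN1 N f a1 = f (N a1) - N (f a1)"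

definition partialN2 :: "('a \<Rightarrow> 'a::ab_group_add) \<Rightarrow> ('a \<Rightarrow> 'a \<Rightarrow> 'a) \<Rightarrow> 'a \<Rightarrow> 'a \<Rightarrow> 'a" where
  "partialN2 N f a1 a2 = f (N a1) (N a2) - N (f a1 (N a2)) - N (f (N a1) a2)
      + N (N (f a1 a2))"

definition dN1 :: "('a \<Rightarrow> 'a \<Rightarrow> 'a::ab_group_add) \<Rightarrow> ('a \<Rightarrow> 'a) \<Rightarrow> ('a \<Rightarrow> 'a) \<Rightarrow> 'a \<Rightarrow> 'a \<Rightarrow> 'a" where
  "dN1 m N F a1 a2 = m (N a1) (F a2) + m (F a1) (N a2)
      - F (m (N a1) a2 + m a1 (N a2) - N (m a1 a2)) - N (hoch1 m F a1 a2)"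

definition delta1 :: "('a \<Rightarrow> 'a \<Rightarrow> 'a::ab_group_add) \<Rightarrow> ('a \<Rightarrow> 'a) \<Rightarrow> ('a \<Rightarrow> 'a)
    \<Rightarrow> ('a \<Rightarrow> 'a \<Rightarrow> 'a) \<times> ('a \<Rightarrow> 'a)" where
  "delta1 m N f = (hoch1 m f, - partialN1 N f)"

text \<open>delta_NAlg : C^2 -> C^3 (n = 2, sign (-1)^2 = 1).\<close>

definition delta2 :: "('a \<Rightarrow> 'a \<Rightarrow> 'a::ab_group_add) \<Rightarrow> ('a \<Rightarrow> 'a)
    \<Rightarrow> ('a \<Rightarrow> 'a \<Rightarrow> 'a) \<times> ('a \<Rightarrow> 'a) \<Rightarrow> ('a \<Rightarrow> 'a \<Rightarrow> 'a \<Rightarrow> 'a) \<times> ('a \<Rightarrow> 'a \<Rightarrow> 'a)" where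
  "delta2 m N c = (hoch2 m (fst c), dN1 m N (snd c) + partialN2 N (fst c))"

definition cochains2 :: "('k::field \<Rightarrow> 'a::ab_group_add \<Rightarrow> 'a)
    \<Rightarrow> (('a \<Rightarrow> 'a \<Rightarrow> 'a) \<times> ('a \<Rightarrow> 'a)) set" where
  "cochains2 sc = {(chi, F). bilin sc chi \<and> lin sc F}"

definition cocycles2 :: "('k::field \<Rightarrow> 'a::ab_group_add \<Rightarrow> 'a) \<Rightarrow> ('a \<Rightarrow> 'a \<Rightarrow> 'a) \<Rightarrow> ('a \<Rightarrow> 'a)
    \<Rightarrow> (('a \<Rightarrow> 'a \<Rightarrow> 'a) \<times> ('a \<Rightarrow> 'a)) set" where
  "cocycles2 sc m N = {c \<in> cochains2 sc. delta2 m N c = 0}"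

definition coboundaries2 :: "('k::field \<Rightarrow> 'a::ab_group_add \<Rightarrow> 'a) \<Rightarrow> ('a \<Rightarrow> 'a \<Rightarrow> 'a) \<Rightarrow> ('a \<Rightarrow> 'a)
    \<Rightarrow> (('a \<Rightarrow> 'a \<Rightarrow> 'a) \<times> ('a \<Rightarrow> 'a)) set" where
  "coboundaries2 sc m N = {delta1 m N f | f. lin sc f}"

definition coh_rel2 :: "('k::field \<Rightarrow> 'a::ab_group_add \<Rightarrow> 'a) \<Rightarrow> ('a \<Rightarrow> 'a \<Rightarrow> 'a) \<Rightarrow> ('a \<Rightarrow> 'a)
    \<Rightarrow> ((('a \<Rightarrow> 'a \<Rightarrow> 'a) \<times> ('a \<Rightarrow> 'a)) \<times> (('a \<Rightarrow> 'a \<Rightarrow> 'a) \<times> ('a \<Rightarrow> 'a))) set" where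
  "coh_rel2 sc m N = {(c, c'). c \<in> cocycles2 sc m N \<and> c' \<in> cocycles2 sc m N \<and>
      (fst c - fst c', snd c - snd c') \<in> coboundaries2 sc m N}"

definition H2_NAlg :: "('k::field \<Rightarrow> 'a::ab_group_add \<Rightarrow> 'a) \<Rightarrow> ('a \<Rightarrow> 'a \<Rightarrow> 'a) \<Rightarrow> ('a \<Rightarrow> 'a)
    \<Rightarrow> (('a \<Rightarrow> 'a \<Rightarrow> 'a) \<times> ('a \<Rightarrow> 'a)) set set" where
  "H2_NAlg sc m N = cocycles2 sc m N // coh_rel2 sc m N"

end

theory Submission
  imports Defs
begin

lemma addD:
  fixes f :: "'a::ab_group_add \<Rightarrow> 'b::ab_group_add"
  assumes "\<And>x y. f (x+y) = f x + f y"
  shows "f 0 = 0" "f (-x) = - f x" "f (x - y) = f x - f y"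
proof -
  show z: "f 0 = 0" using assms[of 0 0] by simp
  have n: "f (-u) = - f u" for u using assms[of u "-u"] z by (simp add: eq_neg_iff_add_eq_0 add.commute)
  show "f (-x) = - f x" by (rule n)
  show "f (x - y) = f x - f y" using assms[of x "-y"] n[of y] by simp
qed

lemma assoc_iff:
  fixes m m1 :: "'a::ab_group_add \<Rightarrow> 'a \<Rightarrow> 'a"
  assumes l1: "\<And>x y z. m (x+y) z = m x z + m y z" and r1: "\<And>x y z. m x (y+z) = m x y + m x z"
    and as: "assoc_mult m"
  shows "assoc_mult (mult_t m m1) \<longleftrightarrow> (\<forall>a b c. hoch2 m m1 a b c = 0)"
proof -
  have l0: "m 0 z = 0" for z using addD(1)[of "\<lambda>x. m x z"] l1 by blast
  have r0: "m z 0 = 0" for z using addD(1)[of "m z"] r1 by blast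
  have A: "m (m a b) c = m a (m b c)" for a b c using as by (simp add: assoc_mult_def)
  show ?thesis
  proof
    assume H: "assoc_mult (mult_t m m1)"
    show "\<forall>a b c. hoch2 m m1 a b c = 0"
    proof (intro allI)
      fix a b c
      have "mult_t m m1 (mult_t m m1 (a,0) (b,0)) (c,0) = mult_t m m1 (a,0) (mult_t m m1 (b,0) (c,0))"
        using H by (simp add: assoc_mult_def)
      then show "hoch2 m m1 a b c = 0"
        by (simp add: mult_t_def hoch2_def l0 r0 l1 r1 algebra_simps)
    qed
  next
    assume H: "\<forall>a b c. hoch2 m m1 a b c = 0"
    show "assoc_mult (mult_t m m1)"
      unfolding assoc_mult_def
    proof (intro allI)
      fix x y z :: "'a \<times> 'a"
      have h: "m x1 (m1 x2 x3) + m1 x1 (m x2 x3) = m1 (m x1 x2) x3 + m (m1 x1 x2) x3" for x1 x2 x3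
        using H[rule_format, of x1 x2 x3] by (simp add: hoch2_def algebra_simps)
      show "mult_t m m1 (mult_t m m1 x y) z = mult_t m m1 x (mult_t m m1 y z)"
        using h[of "fst x" "fst y" "fst z"]
        by (simp add: mult_t_def l1 r1 A algebra_simps)
    qed
  qed
qed

lemma nij_iff:
  fixes m m1 :: "'a::ab_group_add \<Rightarrow> 'a \<Rightarrow> 'a" and N N1 :: "'a \<Rightarrow> 'a"
  assumes l1: "\<And>x y z. m (x+y) z = m x z + m y z" and r1: "\<And>x y z. m x (y+z) = m x y + m x z"
    and nl: "\<And>x y. N (x+y) = N x + N y" and n1l: "\<And>x y. N1 (x+y) = N1 x + N1 y"
    and ml1: "\<And>x y z. m1 (x+y) z = m1 x z + m1 y z" and mr1: "\<And>x y z. m1 x (y+z) = m1 x y + m1 x z"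
    and nj: "nijenhuis_id m N"
  shows "nijenhuis_id (mult_t m m1) (op_t N N1) \<longleftrightarrow> (\<forall>a b. dN1 m N N1 a b + partialN2 N m1 a b = 0)"
proof -
  have l0: "m 0 z = 0" for z using addD(1)[of "\<lambda>x. m x z"] l1 by blast
  have r0: "m z 0 = 0" for z using addD(1)[of "m z"] r1 by blast
  have N0: "N 0 = 0" and Nd: "N (x - y) = N x - N y" for x y using addD[of N] nl by blast+
  have N10: "N1 0 = 0" and N1d: "N1 (x - y) = N1 x - N1 y" for x y using addD[of N1] n1l by blast+
  have ld: "m (x - y) z = m x z - m y z" for x y z using addD(3)[of "\<lambda>x. m x z"] l1 by blast
  have rd: "m z (x - y) = m z x - m z y" for x y z using addD(3)[of "m z"] r1 by blast
  have NJ: "m (N a) (N b) = N (m (N a) b + m a (N b) - N (m a b))" for a b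
    using nj by (simp add: nijenhuis_id_def)
  show ?thesis
  proof
    assume H: "nijenhuis_id (mult_t m m1) (op_t N N1)"
    show "\<forall>a b. dN1 m N N1 a b + partialN2 N m1 a b = 0"
    proof (intro allI)
      fix a b
      have "mult_t m m1 (op_t N N1 (a,0)) (op_t N N1 (b,0)) = op_t N N1 (mult_t m m1 (op_t N N1 (a,0)) (b,0) + mult_t m m1 (a,0) (op_t N N1 (b,0)) - op_t N N1 (mult_t m m1 (a,0) (b,0)))"
        using H by (simp add: nijenhuis_id_def)
      then show "dN1 m N N1 a b + partialN2 N m1 a b = 0"
        by (simp add: mult_t_def op_t_def dN1_def partialN2_def hoch1_def l0 r0 l1 r1 nl n1l N0 N10 Nd N1d ld rd algebra_simps)
    qed
  next
    assume H: "\<forall>a b. dN1 m N N1 a b + partialN2 N m1 a b = 0"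
    show "nijenhuis_id (mult_t m m1) (op_t N N1)"
      unfolding nijenhuis_id_def
    proof (intro allI)
      fix x y :: "'a \<times> 'a"
      obtain a a' where x: "x = (a,a')" by (cases x)
      obtain b b' where y: "y = (b,b')" by (cases y)
      have h: "dN1 m N N1 a b + partialN2 N m1 a b = 0" using H by blast
      show "mult_t m m1 (op_t N N1 x) (op_t N N1 y) = op_t N N1 (mult_t m m1 (op_t N N1 x) y + mult_t m m1 x (op_t N N1 y) - op_t N N1 (mult_t m m1 x y))"
        using h unfolding x y
        by (simp add: NJ mult_t_def op_t_def dN1_def partialN2_def hoch1_def l1 r1 nl n1l Nd N1d ld rd algebra_simps)
    qed
  qed
qed

lemma lin_add: "lin sc f \<Longrightarrow> f (x + y) = f x + f y"
  by (simp add: lin_def Vector_Spaces.linear_iff)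

lemma lin_neg: "lin sc f \<Longrightarrow> lin sc (- f)"
proof -
  assume a: "lin sc f"
  have v: "vector_space sc" using a by (simp add: lin_def Vector_Spaces.linear_iff)
  have sn: "sc c (- y) = - sc c y" for c y
    using v addD(2)[of "sc c" y] unfolding vector_space_def module_def by blast
  show ?thesis using a unfolding lin_def Vector_Spaces.linear_iff fun_Compl_def
    by (auto simp: sn)
qed

lemma lin_neg_inv: "lin sc (- f) \<Longrightarrow> lin sc f"
  using lin_neg[of sc "- f"] by simp

lemma bij_opt: "bij (op_t id phi)"
proof (rule bijI)
  show "inj (op_t id phi)" by (rule injI) (auto simp: op_t_def prod_eq_iff)
  show "surj (op_t id phi)"
  proof (rule surjI)
    fix y :: "'a \<times> 'a"
    show "op_t id phi (fst y, snd y - phi (fst y)) = y" by (simp add: op_t_def)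
  qed
qed

lemma mult_cond_iff:
  fixes m m1 m1' :: "'a::ab_group_add \<Rightarrow> 'a \<Rightarrow> 'a" and phi :: "'a \<Rightarrow> 'a"
  assumes l1: "\<And>x y z. m (x+y) z = m x z + m y z" and r1: "\<And>x y z. m x (y+z) = m x y + m x z"
    and pl: "\<And>x y. phi (x+y) = phi x + phi y"
    and ml1: "\<And>x y z. m1 (x+y) z = m1 x z + m1 y z" and mr1: "\<And>x y z. m1 x (y+z) = m1 x y + m1 x z"
  shows "(\<forall>x y. op_t id phi (mult_t m m1' x y) = mult_t m m1 (op_t id phi x) (op_t id phi y))
     \<longleftrightarrow> m1 - m1' = hoch1 m (- phi)"
proof -
  have l0: "m 0 z = 0" for z using addD(1)[of "\<lambda>x. m x z"] l1 by blast
  have r0: "m z 0 = 0" for z using addD(1)[of "m z"] r1 by blast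
  have ln: "m (- x) z = - m x z" for x z using addD(2)[of "\<lambda>x. m x z"] l1 by blast
  have rn: "m z (- x) = - m z x" for x z using addD(2)[of "m z"] r1 by blast
  have "(\<forall>x y. op_t id phi (mult_t m m1' x y) = mult_t m m1 (op_t id phi x) (op_t id phi y))
     \<longleftrightarrow> (\<forall>a b. m1 a b - m1' a b = hoch1 m (- phi) a b)"
  proof
    assume H: "\<forall>x y. op_t id phi (mult_t m m1' x y) = mult_t m m1 (op_t id phi x) (op_t id phi y)"
    show "\<forall>a b. m1 a b - m1' a b = hoch1 m (- phi) a b"
    proof (intro allI)
      fix a b
      have "op_t id phi (mult_t m m1' (a,0) (b,0)) = mult_t m m1 (op_t id phi (a,0)) (op_t id phi (b,0))"
        using H by blast
      then show "m1 a b - m1' a b = hoch1 m (- phi) a b"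
        by (simp add: op_t_def mult_t_def hoch1_def l0 r0 ln rn algebra_simps)
    qed
  next
    assume H: "\<forall>a b. m1 a b - m1' a b = hoch1 m (- phi) a b"
    show "\<forall>x y. op_t id phi (mult_t m m1' x y) = mult_t m m1 (op_t id phi x) (op_t id phi y)"
    proof (intro allI)
      fix x y :: "'a \<times> 'a"
      have h: "m1 a b = m1' a b - m a (phi b) + phi (m a b) - m (phi a) b" for a b
        using H[rule_format, of a b] by (simp add: hoch1_def ln rn algebra_simps)
      show "op_t id phi (mult_t m m1' x y) = mult_t m m1 (op_t id phi x) (op_t id phi y)"
        by (simp add: h op_t_def mult_t_def l1 r1 pl algebra_simps)
    qed
  qed
  also have "\<dots> \<longleftrightarrow> m1 - m1' = hoch1 m (- phi)" by (simp add: fun_eq_iff)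
  finally show ?thesis .
qed

lemma op_cond_iff:
  fixes N N1 N1' phi :: "'a::ab_group_add \<Rightarrow> 'a"
  assumes nl: "\<And>x y. N (x+y) = N x + N y" and pl: "\<And>x y. phi (x+y) = phi x + phi y"
  shows "(\<forall>x. op_t id phi (op_t N N1' x) = op_t N N1 (op_t id phi x))
     \<longleftrightarrow> N1 - N1' = - partialN1 N (- phi)"
proof -
  have N0: "N 0 = 0" and Nn: "N (- x) = - N x" for x using addD[of N] nl by blast+
  have p0: "phi 0 = 0" using addD[of phi] pl by blast
  have "(\<forall>x. op_t id phi (op_t N N1' x) = op_t N N1 (op_t id phi x))
     \<longleftrightarrow> (\<forall>a. N1 a - N1' a = - partialN1 N (- phi) a)"
  proof
    assume H: "\<forall>x. op_t id phi (op_t N N1' x) = op_t N N1 (op_t id phi x)"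
    show "\<forall>a. N1 a - N1' a = - partialN1 N (- phi) a"
    proof
      fix a
      have "op_t id phi (op_t N N1' (a,0)) = op_t N N1 (op_t id phi (a,0))" using H by blast
      then show "N1 a - N1' a = - partialN1 N (- phi) a"
        by (simp add: op_t_def partialN1_def N0 Nn algebra_simps)
    qed
  next
    assume H: "\<forall>a. N1 a - N1' a = - partialN1 N (- phi) a"
    show "\<forall>x. op_t id phi (op_t N N1' x) = op_t N N1 (op_t id phi x)"
    proof
      fix x :: "'a \<times> 'a"
      have h: "N1 a = N1' a + phi (N a) - N (phi a)" for a
        using H[rule_format, of a] by (simp add: partialN1_def Nn algebra_simps)
      show "op_t id phi (op_t N N1' x) = op_t N N1 (op_t id phi x)"
        by (simp add: h op_t_def nl algebra_simps)
    qed
  qed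
  also have "\<dots> \<longleftrightarrow> N1 - N1' = - partialN1 N (- phi)" by (simp add: fun_eq_iff)
  finally show ?thesis .
qed

lemma nij_facts:
  assumes "nijenhuis_algebra sc m N"
  shows "\<And>x y z. m (x+y) z = m x z + m y z" "\<And>x y z. m x (y+z) = m x y + m x z"
    "\<And>x y. N (x+y) = N x + N y" "assoc_mult m" "nijenhuis_id m N"
  using assms unfolding nijenhuis_algebra_def bilin_def
  by (auto intro: lin_add)

lemma bilin_facts:
  assumes "bilin sc m1"
  shows "\<And>x y z. m1 (x+y) z = m1 x z + m1 y z" "\<And>x y z. m1 x (y+z) = m1 x y + m1 x z"
  using assms unfolding bilin_def by (auto intro: lin_add)

lemma defo_eq:
  fixes sc :: "'k::field \<Rightarrow> 'a::ab_group_add \<Rightarrow> 'a"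
  assumes na: "nijenhuis_algebra sc m N"
  shows "inf_deformation sc m N = cocycles2 sc m N"
proof (intro set_eqI)
  fix c :: "('a \<Rightarrow> 'a \<Rightarrow> 'a) \<times> ('a \<Rightarrow> 'a)"
  obtain m1 N1 where c: "c = (m1, N1)" by (cases c)
  note F = nij_facts[OF na]
  have "c \<in> inf_deformation sc m N \<longleftrightarrow> bilin sc m1 \<and> lin sc N1 \<and>
      (\<forall>a b c. hoch2 m m1 a b c = 0) \<and> (\<forall>a b. dN1 m N N1 a b + partialN2 N m1 a b = 0)"
  proof -
    { assume b: "bilin sc m1" and l: "lin sc N1"
      note B = bilin_facts[OF b]
      have "assoc_mult (mult_t m m1) \<longleftrightarrow> (\<forall>a b c. hoch2 m m1 a b c = 0)"
        by (rule assoc_iff[OF F(1,2,4)])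
      moreover have "nijenhuis_id (mult_t m m1) (op_t N N1) \<longleftrightarrow> (\<forall>a b. dN1 m N N1 a b + partialN2 N m1 a b = 0)"
        by (rule nij_iff[OF F(1,2,3) lin_add[OF l] B F(5)])
      ultimately have "assoc_mult (mult_t m m1) \<and> nijenhuis_id (mult_t m m1) (op_t N N1) \<longleftrightarrow>
         (\<forall>a b c. hoch2 m m1 a b c = 0) \<and> (\<forall>a b. dN1 m N N1 a b + partialN2 N m1 a b = 0)" by blast }
    then show ?thesis unfolding c inf_deformation_def by blast
  qed
  also have "\<dots> \<longleftrightarrow> c \<in> cocycles2 sc m N"
    unfolding c cocycles2_def cochains2_def delta2_def
    by (simp add: zero_prod_def fun_eq_iff)
  finally show "c \<in> inf_deformation sc m N \<longleftrightarrow> c \<in> cocycles2 sc m N" .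
qed

lemma rel_eq:
  fixes sc :: "'k::field \<Rightarrow> 'a::ab_group_add \<Rightarrow> 'a"
  assumes na: "nijenhuis_algebra sc m N"
  shows "deform_equiv sc m N = coh_rel2 sc m N"
proof (intro set_eqI)
  fix p :: "(('a \<Rightarrow> 'a \<Rightarrow> 'a) \<times> ('a \<Rightarrow> 'a)) \<times> (('a \<Rightarrow> 'a \<Rightarrow> 'a) \<times> ('a \<Rightarrow> 'a))"
  obtain m1 N1 m1' N1' where p: "p = ((m1, N1), (m1', N1'))" by (metis prod.collapse)
  note F = nij_facts[OF na]
  have D: "inf_deformation sc m N = cocycles2 sc m N" by (rule defo_eq[OF na])
  show "p \<in> deform_equiv sc m N \<longleftrightarrow> p \<in> coh_rel2 sc m N"
  proof
    assume "p \<in> deform_equiv sc m N"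
    then have i: "(m1, N1) \<in> inf_deformation sc m N" "(m1', N1') \<in> inf_deformation sc m N"
      and "\<exists>phi1. lin sc phi1 \<and>
         (let phit = op_t id phi1 in
            bij phit \<and>
            (\<forall>x y. phit (mult_t m m1' x y) = mult_t m m1 (phit x) (phit y)) \<and>
            (\<forall>x. phit (op_t N N1' x) = op_t N N1 (phit x)))"
      unfolding p deform_equiv_def by auto
    then obtain phi where l: "lin sc phi"
      and c1: "\<forall>x y. op_t id phi (mult_t m m1' x y) = mult_t m m1 (op_t id phi x) (op_t id phi y)"
      and c2: "\<forall>x. op_t id phi (op_t N N1' x) = op_t N N1 (op_t id phi x)"
      by (auto simp: Let_def)
    have b1: "bilin sc m1" using i(1) by (simp add: inf_deformation_def)
    have e1: "m1 - m1' = hoch1 m (- phi)"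
      using mult_cond_iff[OF F(1,2) lin_add[OF l] bilin_facts[OF b1]] c1 by blast
    have e2: "N1 - N1' = - partialN1 N (- phi)"
      using op_cond_iff[OF F(3) lin_add[OF l]] c2 by blast
    have "(m1 - m1', N1 - N1') \<in> coboundaries2 sc m N"
      unfolding coboundaries2_def delta1_def using e1 e2 lin_neg[OF l] by blast
    then show "p \<in> coh_rel2 sc m N" using i D unfolding p coh_rel2_def by simp
  next
    assume "p \<in> coh_rel2 sc m N"
    then have i: "(m1, N1) \<in> cocycles2 sc m N" "(m1', N1') \<in> cocycles2 sc m N"
      and "(m1 - m1', N1 - N1') \<in> coboundaries2 sc m N"
      unfolding p coh_rel2_def by auto
    then obtain f where l: "lin sc f" and e1: "m1 - m1' = hoch1 m f" and e2: "N1 - N1' = - partialN1 N f"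
      unfolding coboundaries2_def delta1_def by auto
    define phi where "phi = - f"
    have fphi: "f = - phi" unfolding phi_def by simp
    have lp: "lin sc phi" unfolding phi_def by (rule lin_neg[OF l])
    have b1: "bilin sc m1" using i(1) by (simp add: cocycles2_def cochains2_def)
    have c1: "\<forall>x y. op_t id phi (mult_t m m1' x y) = mult_t m m1 (op_t id phi x) (op_t id phi y)"
      using mult_cond_iff[OF F(1,2) lin_add[OF lp] bilin_facts[OF b1]] e1 fphi by blast
    have c2: "\<forall>x. op_t id phi (op_t N N1' x) = op_t N N1 (op_t id phi x)"
      using op_cond_iff[OF F(3) lin_add[OF lp]] e2 fphi by blast
    show "p \<in> deform_equiv sc m N"
      unfolding p deform_equiv_def using i D lp c1 c2 bij_opt[of phi]
      by (auto simp: Let_def)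
  qed
qed

theorem theorem4p2:
  fixes sc :: "'k::field_char_0 \<Rightarrow> 'a::ab_group_add \<Rightarrow> 'a"
    and m :: "'a \<Rightarrow> 'a \<Rightarrow> 'a"
    and N :: "'a \<Rightarrow> 'a"
  assumes "nijenhuis_algebra sc m N"
  shows "\<exists>\<Phi>. bij_betw \<Phi> (inf_deformation sc m N // deform_equiv sc m N) (H2_NAlg sc m N)
            \<and> (\<forall>d \<in> inf_deformation sc m N.
                 \<Phi> (deform_equiv sc m N `` {d}) = coh_rel2 sc m N `` {d})"
proof (intro exI[of _ id] conjI ballI)
  show "bij_betw id (inf_deformation sc m N // deform_equiv sc m N) (H2_NAlg sc m N)"
    unfolding H2_NAlg_def defo_eq[OF assms] rel_eq[OF assms] by (rule bij_betw_id)
  fix d assume "d \<in> inf_deformation sc m N"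
  show "id (deform_equiv sc m N `` {d}) = coh_rel2 sc m N `` {d}"
    by (simp add: rel_eq[OF assms])
qed

end
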